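(* Let $G$ be a finite group of order $mn$ and $H$ a normal subgroup of $G$ of order $n$. Then the family of cosets of $H$ in $G$ other than $H$ itself is an $(mn,m-1,n,0,mn-n)$-DPDF and an $(mn,m-1,n,mn-2n,0)$-EPDF in $G$.
   Context: Groups are written multiplicatively with identity $e$; $G^*=G\setminus\{e\}$. For $D\subseteq G$, $\Delta(D)$ is the multiset $\{xy^{-1}: x,y\in D, x\ne y\}$; for $D_1,D_2\subseteq G$, $\Delta(D_1,D_2)$ is the multiset $\{xy^{-1}:x\in D_1,y\in D_2\}$. For a family $A=\{A_1,\dots,A_s\}$ of pairwise disjoint subsets, ${\rm Int}(A)=\bigcup_i\Delta(A_i)$ and ${\rm Ext}(A)=\bigcup_{i\ne j}\Delta(A_i,A_j)$ (multiset unions). For $|G|=v$, a $(v,s,k,\lambda,\mu)$-DPDF is a family of $s$ pairwise disjoint $k$-subsets of $G^*$ with union $S$ such that ${\rm Int}(A)$ contains each element of $S$ exactly $\lambda$ times and each element of $G\setminus(S\cup\{e\})$ exactly $\mu$ times; a $(v,s,k,\lambda,\mu)$-EPDF is defined the same way using ${\rm Ext}(A)$. *)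

theory Defs
  imports "HOL-Algebra.Algebra" "HOL-Library.Multiset"
begin

definition diff_ms :: "('a, 'b) monoid_scheme \<Rightarrow> 'a set \<Rightarrow> 'a multiset" where
  "diff_ms G D = image_mset (\<lambda>(x, y). x \<otimes>\<^bsub>G\<^esub> inv\<^bsub>G\<^esub> y) (mset_set {(x, y). x \<in> D \<and> y \<in> D \<and> x \<noteq> y})"

definition diff2_ms :: "('a, 'b) monoid_scheme \<Rightarrow> 'a set \<Rightarrow> 'a set \<Rightarrow> 'a multiset" where
  "diff2_ms G D1 D2 = image_mset (\<lambda>(x, y). x \<otimes>\<^bsub>G\<^esub> inv\<^bsub>G\<^esub> y) (mset_set (D1 \<times> D2))"

definition Int_ms :: "('a, 'b) monoid_scheme \<Rightarrow> 'a set set \<Rightarrow> 'a multiset" where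
  "Int_ms G A = (\<Sum>D\<in>A. diff_ms G D)"

definition Ext_ms :: "('a, 'b) monoid_scheme \<Rightarrow> 'a set set \<Rightarrow> 'a multiset" where
  "Ext_ms G A = (\<Sum>P\<in>{(D1, D2). D1 \<in> A \<and> D2 \<in> A \<and> D1 \<noteq> D2}. diff2_ms G (fst P) (snd P))"

definition PDF_prop :: "('a, 'b) monoid_scheme \<Rightarrow> nat \<Rightarrow> nat \<Rightarrow> nat \<Rightarrow> nat \<Rightarrow> nat
    \<Rightarrow> 'a set set \<Rightarrow> 'a multiset \<Rightarrow> bool" where
  "PDF_prop G v s k lam mu A M \<longleftrightarrow>
     finite (carrier G) \<and> card (carrier G) = v \<and>
     finite A \<and> card A = s \<and>
     (\<forall>D\<in>A. D \<subseteq> carrier G - {\<one>\<^bsub>G\<^esub>} \<and> card D = k) \<and>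
     (\<forall>D1\<in>A. \<forall>D2\<in>A. D1 \<noteq> D2 \<longrightarrow> D1 \<inter> D2 = {}) \<and>
     (\<forall>x\<in>\<Union>A. count M x = lam) \<and>
     (\<forall>x\<in>carrier G - (\<Union>A \<union> {\<one>\<^bsub>G\<^esub>}). count M x = mu)"

definition DPDF :: "('a, 'b) monoid_scheme \<Rightarrow> nat \<Rightarrow> nat \<Rightarrow> nat \<Rightarrow> nat \<Rightarrow> nat \<Rightarrow> 'a set set \<Rightarrow> bool" where
  "DPDF G v s k lam mu A \<longleftrightarrow> PDF_prop G v s k lam mu A (Int_ms G A)"

definition EPDF :: "('a, 'b) monoid_scheme \<Rightarrow> nat \<Rightarrow> nat \<Rightarrow> nat \<Rightarrow> nat \<Rightarrow> nat \<Rightarrow> 'a set set \<Rightarrow> bool" where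
  "EPDF G v s k lam mu A \<longleftrightarrow> PDF_prop G v s k lam mu A (Ext_ms G A)"

end

theory Submission
  imports Defs
begin

lemma count_img_mset_set:
  assumes "finite P"
  shows "count (image_mset f (mset_set P)) x = card {p\<in>P. f p = x}"
proof -
  have "count (image_mset f (mset_set P)) x = (\<Sum>y\<in>f -` {x} \<inter> P. 1)"
    unfolding count_image_mset using assms by (intro sum.cong) auto
  also have "\<dots> = card (f -` {x} \<inter> P)" by simp
  also have "f -` {x} \<inter> P = {p\<in>P. f p = x}" by auto
  finally show ?thesis .
qed

context normal
begin

lemma H_rcos: "H \<in> rcosets H"
  using rcosetsI[OF subset, of \<one>] coset_mult_one[OF subset] by simp

lemma rcos_eq_rep: "D \<in> rcosets H \<Longrightarrow> b \<in> D \<Longrightarrow> D = H #> b"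
  unfolding RCOSETS_def using repr_independence subgroup_axioms by blast

lemma rcos_carrier: "D \<in> rcosets H \<Longrightarrow> D \<subseteq> carrier G"
  using rcosets_part_G[OF subgroup_axioms] by blast

lemma same_rcos:
  assumes "D \<in> rcosets H" "a \<in> D" "b \<in> D"
  shows "a \<otimes> inv b \<in> H"
proof -
  have "D = H #> b" using rcos_eq_rep assms by blast
  moreover have "b \<in> carrier G" using rcos_carrier assms by blast
  ultimately show ?thesis using rcos_module_imp[OF is_group] assms by blast
qed

lemma rcos_disj: "D1 \<in> rcosets H \<Longrightarrow> D2 \<in> rcosets H \<Longrightarrow> D1 \<noteq> D2 \<Longrightarrow> D1 \<inter> D2 = {}"
  using rcos_disjoint[OF subgroup_axioms] unfolding pairwise_def disjnt_def by blast

lemma union_A: "x \<in> \<Union>(rcosets H - {H}) \<longleftrightarrow> x \<in> carrier G \<and> x \<notin> H"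
proof
  assume "x \<in> \<Union>(rcosets H - {H})"
  then obtain D where D: "D \<in> rcosets H" "D \<noteq> H" "x \<in> D" by blast
  then show "x \<in> carrier G \<and> x \<notin> H" using rcos_carrier rcos_disj[OF D(1) H_rcos D(2)] by blast
next
  assume x: "x \<in> carrier G \<and> x \<notin> H"
  then have "H #> x \<in> rcosets H" "x \<in> H #> x" using rcosetsI[OF subset] rcos_self subgroup_axioms by auto
  moreover have "H #> x \<noteq> H" using x calculation by auto
  ultimately show "x \<in> \<Union>(rcosets H - {H})" by blast
qed

lemma pair_in: "a \<in> carrier G \<Longrightarrow> b \<in> carrier G \<Longrightarrow> a \<otimes> inv b \<in> H \<Longrightarrow> a \<in> H #> b"
  using rcos_module[OF is_group] by blast

lemma int_count:
  assumes fin: "finite (carrier G)"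
  shows "count (Int_ms G (rcosets H - {H})) x =
    card {(a,b). a \<in> carrier G - H \<and> b \<in> carrier G - H \<and> a \<otimes> inv b \<in> H \<and> a \<noteq> b \<and> a \<otimes> inv b = x}"
proof -
  let ?A = "rcosets H - {H}"
  let ?f = "\<lambda>(x, y). x \<otimes> inv y"
  let ?S = "\<lambda>D. {p \<in> {(a, b). a \<in> D \<and> b \<in> D \<and> a \<noteq> b}. ?f p = x}"
  have finR: "finite (rcosets H)" using fin by (simp add: finite_UnionD rcosets_part_G[OF subgroup_axioms])
  have finD: "\<And>D. D \<in> rcosets H \<Longrightarrow> finite D" using rcos_carrier fin finite_subset by blast
  have "count (Int_ms G ?A) x = (\<Sum>D\<in>?A. card (?S D))"
    unfolding Int_ms_def diff_ms_def count_sum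
  proof (rule sum.cong[OF refl])
    fix D assume "D \<in> ?A"
    have "finite {(a, b). a \<in> D \<and> b \<in> D \<and> a \<noteq> b}"
    proof (rule finite_subset)
      show "{(a, b). a \<in> D \<and> b \<in> D \<and> a \<noteq> b} \<subseteq> D \<times> D" by blast
      show "finite (D \<times> D)" using finD \<open>D \<in> ?A\<close> by blast
    qed
    then show "count (image_mset ?f (mset_set {(a, b). a \<in> D \<and> b \<in> D \<and> a \<noteq> b})) x = card (?S D)"
      by (rule count_img_mset_set)
  qed
  also have "\<dots> = card (\<Union>D\<in>?A. ?S D)"
  proof (rule card_UN_disjoint[symmetric])
    show "finite ?A" using finR by simp
    show "\<forall>i\<in>?A. finite (?S i)"
    proof
      fix D assume "D \<in> ?A"
      then have "finite (D \<times> D)" using finD by auto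
      then show "finite (?S D)" by (rule finite_subset[rotated]) auto
    qed
    show "\<forall>i\<in>?A. \<forall>j\<in>?A. i \<noteq> j \<longrightarrow> ?S i \<inter> ?S j = {}"
    proof (intro ballI impI)
      fix i j assume "i \<in> ?A" "j \<in> ?A" "i \<noteq> j"
      then have "i \<inter> j = {}" using rcos_disj by blast
      then show "?S i \<inter> ?S j = {}" by auto
    qed
  qed
  also have "(\<Union>D\<in>?A. ?S D) = {(a,b). a \<in> carrier G - H \<and> b \<in> carrier G - H \<and> a \<otimes> inv b \<in> H \<and> a \<noteq> b \<and> a \<otimes> inv b = x}" (is "?L = ?R")
  proof (rule Set.set_eqI)
    fix p :: "'a \<times> 'a" obtain a b where p: "p = (a, b)" by (cases p)
    show "p \<in> ?L \<longleftrightarrow> p \<in> ?R" unfolding p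
    proof
        assume "(a, b) \<in> (\<Union>D\<in>?A. ?S D)"
    then obtain D where D: "D \<in> ?A" "a \<in> D" "b \<in> D" "a \<noteq> b" "a \<otimes> inv b = x" by auto
    then have "a \<in> \<Union>?A" "b \<in> \<Union>?A" by blast+
    then have u: "a \<in> carrier G - H" "b \<in> carrier G - H" using union_A by blast+
    have "a \<otimes> inv b \<in> H" using same_rcos[of D a b] D by blast
    then show "(a, b) \<in> {(a,b). a \<in> carrier G - H \<and> b \<in> carrier G - H \<and> a \<otimes> inv b \<in> H \<and> a \<noteq> b \<and> a \<otimes> inv b = x}"
      using u D by simp
  next
        assume "(a, b) \<in> {(a,b). a \<in> carrier G - H \<and> b \<in> carrier G - H \<and> a \<otimes> inv b \<in> H \<and> a \<noteq> b \<and> a \<otimes> inv b = x}"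
    then have ab: "a \<in> carrier G" "b \<in> carrier G" "a \<notin> H" "b \<notin> H" "a \<otimes> inv b \<in> H" "a \<noteq> b" "a \<otimes> inv b = x" by auto
    have "H #> b \<in> rcosets H" "b \<in> H #> b" "a \<in> H #> b"
      using ab rcosetsI[OF subset] rcos_self subgroup_axioms pair_in by auto
    moreover have "H #> b \<noteq> H" using ab calculation by auto
    ultimately show "(a, b) \<in> (\<Union>D\<in>?A. ?S D)" using ab by (intro UN_I[of "H #> b"]) simp_all
    qed
  qed
  finally show ?thesis .
qed

lemma ext_count:
  assumes fin: "finite (carrier G)"
  shows "count (Ext_ms G (rcosets H - {H})) x =
    card {(a,b). a \<in> carrier G - H \<and> b \<in> carrier G - H \<and> a \<otimes> inv b \<notin> H \<and> a \<otimes> inv b = x}"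
proof -
  let ?A = "rcosets H - {H}"
  let ?P = "{(D1, D2). D1 \<in> ?A \<and> D2 \<in> ?A \<and> D1 \<noteq> D2}"
  let ?f = "\<lambda>(x, y). x \<otimes> inv y"
  let ?S = "\<lambda>Q. {p \<in> fst Q \<times> snd Q. ?f p = x}"
  have finR: "finite (rcosets H)" using fin by (simp add: finite_UnionD rcosets_part_G[OF subgroup_axioms])
  have finD: "\<And>D. D \<in> rcosets H \<Longrightarrow> finite D" using rcos_carrier fin finite_subset by blast
  have finP: "finite ?P"
  proof (rule finite_subset)
    show "?P \<subseteq> (rcosets H) \<times> (rcosets H)" by blast
    show "finite ((rcosets H) \<times> (rcosets H))" using finR by blast
  qed
  have "count (Ext_ms G ?A) x = (\<Sum>Q\<in>?P. card (?S Q))"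
    unfolding Ext_ms_def diff2_ms_def count_sum
  proof (rule sum.cong[OF refl])
    fix Q assume "Q \<in> ?P"
    then have "fst Q \<in> rcosets H" "snd Q \<in> rcosets H" by auto
    then have "finite (fst Q \<times> snd Q)"
      using finD by blast
    then show "count (image_mset ?f (mset_set (fst Q \<times> snd Q))) x = card (?S Q)"
      by (rule count_img_mset_set)
  qed
  also have "\<dots> = card (\<Union>Q\<in>?P. ?S Q)"
  proof (rule card_UN_disjoint[symmetric])
    show "finite ?P" by (rule finP)
    show "\<forall>i\<in>?P. finite (?S i)"
    proof
      fix Q assume "Q \<in> ?P"
      then have "fst Q \<in> rcosets H" "snd Q \<in> rcosets H" by auto
      then have "finite (fst Q \<times> snd Q)"
        using finD by blast
      then show "finite (?S Q)" by simp
    qed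
    show "\<forall>i\<in>?P. \<forall>j\<in>?P. i \<noteq> j \<longrightarrow> ?S i \<inter> ?S j = {}"
    proof (intro ballI impI)
      fix i j assume "i \<in> ?P" "j \<in> ?P" "i \<noteq> j"
      then have "fst i \<in> rcosets H" "fst j \<in> rcosets H" "snd i \<in> rcosets H" "snd j \<in> rcosets H"
        by (auto simp: case_prod_beta)
      then have "fst i \<inter> fst j = {} \<or> snd i \<inter> snd j = {}"
        using \<open>i \<noteq> j\<close> rcos_disj[of "fst i" "fst j"] rcos_disj[of "snd i" "snd j"] prod_eqI[of i j]
        by blast
      then show "?S i \<inter> ?S j = {}" by blast
    qed
  qed
  also have "(\<Union>Q\<in>?P. ?S Q) = {(a,b). a \<in> carrier G - H \<and> b \<in> carrier G - H \<and> a \<otimes> inv b \<notin> H \<and> a \<otimes> inv b = x}" (is "?L = ?R")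
  proof (rule Set.set_eqI)
    fix p :: "'a \<times> 'a" obtain a b where p: "p = (a, b)" by (cases p)
    show "p \<in> ?L \<longleftrightarrow> p \<in> ?R" unfolding p
    proof
        assume "(a, b) \<in> (\<Union>Q\<in>?P. ?S Q)"
    then obtain D1 D2 where D: "D1 \<in> ?A" "D2 \<in> ?A" "D1 \<noteq> D2" "a \<in> D1" "b \<in> D2" "a \<otimes> inv b = x" by auto
    then have u: "a \<in> \<Union>?A" "b \<in> \<Union>?A" by blast+
    then have u2: "a \<in> carrier G - H" "b \<in> carrier G - H" using union_A by blast+
    have "a \<otimes> inv b \<notin> H"
    proof
      assume "a \<otimes> inv b \<in> H"
      then have "a \<in> H #> b" using pair_in u2 by blast
      moreover have "D2 = H #> b" using rcos_eq_rep D by blast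
      ultimately show False using rcos_disj[of D1 D2] D by blast
    qed
    then show "(a, b) \<in> {(a,b). a \<in> carrier G - H \<and> b \<in> carrier G - H \<and> a \<otimes> inv b \<notin> H \<and> a \<otimes> inv b = x}"
      using D u2 by simp
  next
        assume "(a, b) \<in> {(a,b). a \<in> carrier G - H \<and> b \<in> carrier G - H \<and> a \<otimes> inv b \<notin> H \<and> a \<otimes> inv b = x}"
    then have ab: "a \<in> carrier G" "b \<in> carrier G" "a \<notin> H" "b \<notin> H" "a \<otimes> inv b \<notin> H" "a \<otimes> inv b = x" by auto
    have "H #> b \<in> rcosets H" "b \<in> H #> b" "H #> a \<in> rcosets H" "a \<in> H #> a"
      using ab rcosetsI[OF subset] rcos_self subgroup_axioms by auto
    moreover have "H #> b \<noteq> H" "H #> a \<noteq> H" using ab calculation by blast+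
    moreover have "H #> a \<noteq> H #> b"
      using ab calculation rcos_module_imp[OF is_group, of b a] by metis
    ultimately show "(a, b) \<in> (\<Union>Q\<in>?P. ?S Q)" using ab
      by (intro UN_I[of "(H #> a, H #> b)"]) simp_all
    qed
  qed
  finally show ?thesis .
qed


lemma int_set_H:
  assumes "x \<in> H" "x \<noteq> \<one>"
  shows "{(a,b). a \<in> carrier G - H \<and> b \<in> carrier G - H \<and> a \<otimes> inv b \<in> H \<and> a \<noteq> b \<and> a \<otimes> inv b = x}
     = (\<lambda>b. (x \<otimes> b, b)) ` (carrier G - H)" (is "?L = ?R")
proof (rule Set.set_eqI)
  have xc: "x \<in> carrier G" using assms subset by blast
  fix p :: "'a \<times> 'a" obtain a b where p: "p = (a, b)" by (cases p)
  show "p \<in> ?L \<longleftrightarrow> p \<in> ?R" unfolding p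
  proof
    assume "(a, b) \<in> ?L"
    then have ab: "a \<in> carrier G" "b \<in> carrier G - H" "a \<otimes> inv b = x" by auto
    then have "a = x \<otimes> b" using inv_solve_right'[of x a b] xc by blast
    then show "(a, b) \<in> ?R" using ab by blast
  next
    assume "(a, b) \<in> ?R"
    then have b: "b \<in> carrier G" "b \<notin> H" and a: "a = x \<otimes> b" by auto
    have ac: "a \<in> carrier G" using a b xc by simp
    have "a \<notin> H"
    proof
      assume "a \<in> H"
      then have "inv x \<otimes> a \<in> H" using assms m_closed m_inv_closed by blast
      moreover have "inv x \<otimes> a = b" using a b xc by (simp add: m_assoc[symmetric])
      ultimately show False using b by simp
    qed
    moreover have "a \<otimes> inv b = x" using inv_solve_right'[of x a b] xc a b ac by blast
    moreover have "a \<noteq> b" using a b xc assms by auto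
    ultimately show "(a, b) \<in> ?L" using ac b assms by simp
  qed
qed

lemma ext_set_notH:
  assumes "x \<in> carrier G" "x \<notin> H"
  shows "{(a,b). a \<in> carrier G - H \<and> b \<in> carrier G - H \<and> a \<otimes> inv b \<notin> H \<and> a \<otimes> inv b = x}
     = (\<lambda>b. (x \<otimes> b, b)) ` (carrier G - H - (\<lambda>h. inv x \<otimes> h) ` H)" (is "?L = ?R")
proof (rule Set.set_eqI)
  have xc: "x \<in> carrier G" using assms by blast
  have key: "\<And>b. b \<in> carrier G \<Longrightarrow> x \<otimes> b \<in> H \<longleftrightarrow> b \<in> (\<lambda>h. inv x \<otimes> h) ` H"
  proof
    fix b assume b: "b \<in> carrier G" "x \<otimes> b \<in> H"
    have "b = inv x \<otimes> (x \<otimes> b)" using b xc by (simp add: m_assoc[symmetric])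
    then show "b \<in> (\<lambda>h. inv x \<otimes> h) ` H" using b by blast
  next
    fix b assume b: "b \<in> carrier G" "b \<in> (\<lambda>h. inv x \<otimes> h) ` H"
    then obtain h where h: "h \<in> H" "b = inv x \<otimes> h" by blast
    then have "x \<otimes> b = h" using xc subset by (simp add: m_assoc[symmetric])
    then show "x \<otimes> b \<in> H" using h by simp
  qed
  fix p :: "'a \<times> 'a" obtain a b where p: "p = (a, b)" by (cases p)
  show "p \<in> ?L \<longleftrightarrow> p \<in> ?R" unfolding p
  proof
    assume "(a, b) \<in> ?L"
    then have ab: "a \<in> carrier G" "a \<notin> H" "b \<in> carrier G - H" "a \<otimes> inv b = x" by auto
    then have a: "a = x \<otimes> b" using inv_solve_right'[of x a b] xc by blast
    then have "b \<notin> (\<lambda>h. inv x \<otimes> h) ` H" using key ab by blast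
    then show "(a, b) \<in> ?R" using ab a by blast
  next
    assume "(a, b) \<in> ?R"
    then have b: "b \<in> carrier G" "b \<notin> H" "b \<notin> (\<lambda>h. inv x \<otimes> h) ` H" and a: "a = x \<otimes> b" by auto
    have ac: "a \<in> carrier G" using a b xc by simp
    have "a \<notin> H" using key b a by blast
    moreover have "a \<otimes> inv b = x" using inv_solve_right'[of x a b] xc a b ac by blast
    ultimately show "(a, b) \<in> ?L" using ac b assms by simp
  qed
qed

lemma main_normal:
  assumes "finite (carrier G)" and "card (carrier G) = m * n" and "card H = n"
  shows "DPDF G (m * n) (m - 1) n 0 (m * n - n) (rcosets H - {H})
       \<and> EPDF G (m * n) (m - 1) n (m * n - 2 * n) 0 (rcosets H - {H})"
proof -
  note fin = assms(1)
  let ?A = "rcosets H - {H}"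
  have finH: "finite H" using fin subset finite_subset by blast
  have oneH: "\<one> \<in> H" by (rule subgroup.one_closed[OF subgroup_axioms])
  have npos: "n > 0" using finH assms(3) oneH card_gt_0_iff by blast
  have "card (rcosets H) * n = m * n" using lagrange[OF subgroup_axioms] assms(2,3) by (simp add: order_def)
  then have cR: "card (rcosets H) = m" using npos by simp
  have finR: "finite (rcosets H)" using fin by (simp add: finite_UnionD rcosets_part_G[OF subgroup_axioms])
  have cA: "card ?A = m - 1" using cR H_rcos finR by simp
  have members: "\<forall>D\<in>?A. D \<subseteq> carrier G - {\<one>} \<and> card D = n"
  proof
    fix D assume D: "D \<in> ?A"
    have "D \<inter> H = {}" using D H_rcos rcos_disj by blast
    then have "\<one> \<notin> D" using oneH by blast
    moreover have "D \<subseteq> carrier G" using D rcos_carrier by blast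
    moreover have "card D = n" using card_rcosets_equal[of D H] D subset assms(3) by simp
    ultimately show "D \<subseteq> carrier G - {\<one>} \<and> card D = n" by blast
  qed
  have disj: "\<forall>D1\<in>?A. \<forall>D2\<in>?A. D1 \<noteq> D2 \<longrightarrow> D1 \<inter> D2 = {}" using rcos_disj by blast
  have cGH: "card (carrier G - H) = m * n - n" using card_Diff_subset[OF finH subset] assms(2,3) by simp
  have int1: "\<forall>x\<in>\<Union>?A. count (Int_ms G ?A) x = 0"
  proof
    fix x assume "x \<in> \<Union>?A"
    then have "x \<notin> H" by (metis union_A)
    then have "{(a,b). a \<in> carrier G - H \<and> b \<in> carrier G - H \<and> a \<otimes> inv b \<in> H \<and> a \<noteq> b \<and> a \<otimes> inv b = x} = {}"
      by auto
    then show "count (Int_ms G ?A) x = 0" unfolding int_count[OF fin] by (metis card.empty)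
  qed
  have int2: "\<forall>x\<in>carrier G - (\<Union>?A \<union> {\<one>}). count (Int_ms G ?A) x = m * n - n"
  proof
    fix x assume x: "x \<in> carrier G - (\<Union>?A \<union> {\<one>})"
    then have x1: "x \<notin> \<Union>?A" "x \<in> carrier G" "x \<noteq> \<one>" by blast+
    then have xH: "x \<in> H" "x \<noteq> \<one>" by (metis union_A)+
    have "count (Int_ms G ?A) x = card ((\<lambda>b. (x \<otimes> b, b)) ` (carrier G - H))"
      unfolding int_count[OF fin] int_set_H[OF xH] ..
    also have "\<dots> = card (carrier G - H)" by (rule card_image) (auto simp: inj_on_def)
    finally show "count (Int_ms G ?A) x = m * n - n" using cGH by simp
  qed
  have ext1: "\<forall>x\<in>\<Union>?A. count (Ext_ms G ?A) x = m * n - 2 * n"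
  proof
    fix x assume "x \<in> \<Union>?A"
    then have xH: "x \<in> carrier G" "x \<notin> H" by (metis union_A)+
    have "count (Ext_ms G ?A) x = card ((\<lambda>b. (x \<otimes> b, b)) ` (carrier G - H - (\<lambda>h. inv x \<otimes> h) ` H))"
      unfolding ext_count[OF fin] ext_set_notH[OF xH] ..
    also have "\<dots> = card (carrier G - H - (\<lambda>h. inv x \<otimes> h) ` H)" by (rule card_image) (auto simp: inj_on_def)
    also have "\<dots> = card (carrier G - H) - card ((\<lambda>h. inv x \<otimes> h) ` H)"
    proof (rule card_Diff_subset)
      show "finite ((\<lambda>h. inv x \<otimes> h) ` H)" using finH by simp
      show "(\<lambda>h. inv x \<otimes> h) ` H \<subseteq> carrier G - H"
      proof
        fix y assume "y \<in> (\<lambda>h. inv x \<otimes> h) ` H"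
        then obtain h where h: "h \<in> H" "y = inv x \<otimes> h" by blast
        have yc: "y \<in> carrier G" using h xH subset by blast
        have "y \<notin> H"
        proof
          assume "y \<in> H"
          then have "h \<otimes> inv y \<in> H" using h by blast
          moreover have "h \<otimes> inv y = x"
          proof -
            have hc: "h \<in> carrier G" using h subset by blast
            have "h \<otimes> inv y = h \<otimes> (inv h \<otimes> x)" using h hc xH by (simp add: inv_mult_group)
            also have "\<dots> = x" using hc xH by (simp add: m_assoc[symmetric])
            finally show ?thesis .
          qed
          ultimately show False using xH by simp
        qed
        then show "y \<in> carrier G - H" using yc by blast
      qed
    qed
    also have "card ((\<lambda>h. inv x \<otimes> h) ` H) = n"
      using assms(3) xH subset by (subst card_image) (auto simp: inj_on_def)
    finally show "count (Ext_ms G ?A) x = m * n - 2 * n" using cGH by simp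
  qed
  have ext2: "\<forall>x\<in>carrier G - (\<Union>?A \<union> {\<one>}). count (Ext_ms G ?A) x = 0"
  proof
    fix x assume x: "x \<in> carrier G - (\<Union>?A \<union> {\<one>})"
    then have x1: "x \<notin> \<Union>?A" "x \<in> carrier G" by blast+
    then have "x \<in> H" by (metis union_A)
    then have "{(a,b). a \<in> carrier G - H \<and> b \<in> carrier G - H \<and> a \<otimes> inv b \<notin> H \<and> a \<otimes> inv b = x} = {}"
      by auto
    then show "count (Ext_ms G ?A) x = 0" unfolding ext_count[OF fin] by (metis card.empty)
  qed
  show ?thesis unfolding DPDF_def EPDF_def PDF_prop_def
    using fin assms(2) finR cA members disj int1 int2 ext1 ext2 by simp
qed


end

theorem mainTheorem9:
  fixes G :: "('a, 'b) monoid_scheme" and H :: "'a set" and m n :: nat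
  assumes "group G" and "finite (carrier G)" and "card (carrier G) = m * n"
    and "H \<lhd> G" and "card H = n"
  shows "DPDF G (m * n) (m - 1) n 0 (m * n - n) (rcosets\<^bsub>G\<^esub> H - {H})
       \<and> EPDF G (m * n) (m - 1) n (m * n - 2 * n) 0 (rcosets\<^bsub>G\<^esub> H - {H})"
  using normal.main_normal[OF assms(4) assms(2,3,5)] .

end
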